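(* Let $-A$ be the generator of a bounded $C_0$-semigroup $(T(s))_{s\ge0}$ on a Banach space $X$. Suppose $\varphi:(0,\infty)\to(0,\infty)$ satisfies $\varphi(t)\searrow0$ as $t\to\infty$ and \[\|\mathcal C_t(A)x\|=O(\varphi(t))\quad(t\to\infty)\quad\text{for every }x\in\operatorname{dom}_\infty(A):=\bigcap_{n\ge0}\operatorname{dom}(A^n).\] Then $A$ is invertible (i.e. has a bounded inverse defined on all of $X$).
   Context: Cesàro means: $\mathcal C_t(A)x=\frac1t\int_0^tT(s)x\,\mathrm ds$ for $t>0$, $x\in X$. *)

theory Defs
  imports "HOL-Analysis.Analysis" "HOL-Library.Landau_Symbols"
begin

definition c0_semigroup :: "(real \<Rightarrow> ('a::banach \<Rightarrow>\<^sub>L 'a)) \<Rightarrow> bool" where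
  "c0_semigroup T \<longleftrightarrow>
     T 0 = id_blinfun \<and>
     (\<forall>s t. 0 \<le> s \<longrightarrow> 0 \<le> t \<longrightarrow> T (s + t) = T s o\<^sub>L T t) \<and>
     (\<forall>x. continuous_on {0..} (\<lambda>s. blinfun_apply (T s) x))"

definition bounded_semigroup :: "(real \<Rightarrow> ('a::real_normed_vector \<Rightarrow>\<^sub>L 'a)) \<Rightarrow> bool" where
  "bounded_semigroup T \<longleftrightarrow> (\<exists>M. \<forall>s\<ge>0. norm (T s) \<le> M)"

definition gen_dom :: "(real \<Rightarrow> ('a::real_normed_vector \<Rightarrow>\<^sub>L 'a)) \<Rightarrow> 'a set" where
  "gen_dom T = {x. \<exists>y. ((\<lambda>h. (1 / h) *\<^sub>R (blinfun_apply (T h) x - x)) \<longlongrightarrow> y) (at_right 0)}"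

definition generator :: "(real \<Rightarrow> ('a::real_normed_vector \<Rightarrow>\<^sub>L 'a)) \<Rightarrow> 'a \<Rightarrow> 'a" where
  "generator T x = Lim (at_right 0) (\<lambda>h. (1 / h) *\<^sub>R (blinfun_apply (T h) x - x))"

fun dom_pow :: "'a set \<Rightarrow> ('a \<Rightarrow> 'a) \<Rightarrow> nat \<Rightarrow> 'a set" where
  "dom_pow D A 0 = UNIV"
| "dom_pow D A (Suc n) = {x \<in> D. A x \<in> dom_pow D A n}"

definition dom_inf :: "'a set \<Rightarrow> ('a \<Rightarrow> 'a) \<Rightarrow> 'a set" where
  "dom_inf D A = (\<Inter>n. dom_pow D A n)"

definition cesaro :: "(real \<Rightarrow> ('a::banach \<Rightarrow>\<^sub>L 'a)) \<Rightarrow> real \<Rightarrow> 'a \<Rightarrow> 'a" where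
  "cesaro T t x = (1 / t) *\<^sub>R integral {0..t} (\<lambda>s. blinfun_apply (T s) x)"

end

theory Submission
  imports Defs "HOL-Computational_Algebra.Polynomial"
begin

fun Ck :: "nat \<Rightarrow> (real \<Rightarrow> real) \<Rightarrow> bool" where
  "Ck 0 f = True"
| "Ck (Suc k) f = ((\<forall>x. f differentiable (at x)) \<and> Ck k (deriv f))"

definition smooth :: "(real \<Rightarrow> real) \<Rightarrow> bool" where "smooth f \<longleftrightarrow> (\<forall>k. Ck k f)"

lemma Ck_Suc_imp: "Ck (Suc k) f \<Longrightarrow> Ck k f"
  by (induction k arbitrary: f) auto

lemma deriv_fun_eq:
  assumes "\<And>x. DERIV f x :> g x" shows "deriv f = g"
  using assms DERIV_imp_deriv by blast

lemma Ck_add: "Ck k f \<Longrightarrow> Ck k g \<Longrightarrow> Ck k (\<lambda>x. f x + g x)"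
proof (induction k arbitrary: f g)
  case 0 then show ?case by simp
next
  case (Suc k)
  have df: "\<And>x. DERIV f x :> deriv f x" and dg: "\<And>x. DERIV g x :> deriv g x"
    using Suc.prems DERIV_deriv_iff_real_differentiable by auto
  have "deriv (\<lambda>x. f x + g x) = (\<lambda>x. deriv f x + deriv g x)"
    by (rule deriv_fun_eq) (intro DERIV_add df dg)
  moreover have "\<forall>x. (\<lambda>x. f x + g x) differentiable (at x)"
    using Suc.prems by auto
  ultimately show ?case using Suc by auto
qed

lemma Ck_cmult: "Ck k f \<Longrightarrow> Ck k (\<lambda>x. c * f x)"
proof (induction k arbitrary: f)
  case 0 then show ?case by simp
next
  case (Suc k)
  have df: "\<And>x. DERIV f x :> deriv f x"
    using Suc.prems DERIV_deriv_iff_real_differentiable by auto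
  have "deriv (\<lambda>x. c * f x) = (\<lambda>x. c * deriv f x)"
    by (rule deriv_fun_eq) (intro DERIV_cmult df)
  moreover have "\<forall>x. (\<lambda>x. c * f x) differentiable (at x)"
    using Suc.prems by auto
  ultimately show ?case using Suc by auto
qed

lemma Ck_mult: "Ck k f \<Longrightarrow> Ck k g \<Longrightarrow> Ck k (\<lambda>x. f x * g x)"
proof (induction k arbitrary: f g)
  case 0 then show ?case by simp
next
  case (Suc k)
  have df: "\<And>x. DERIV f x :> deriv f x" and dg: "\<And>x. DERIV g x :> deriv g x"
    using Suc.prems DERIV_deriv_iff_real_differentiable by auto
  have "deriv (\<lambda>x. f x * g x) = (\<lambda>x. deriv f x * g x + f x * deriv g x)"
    by (rule deriv_fun_eq) (metis (no_types) DERIV_mult[OF df dg] mult.commute)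
  moreover have "\<forall>x. (\<lambda>x. f x * g x) differentiable (at x)"
    using Suc.prems by auto
  moreover have "Ck k (\<lambda>x. deriv f x * g x)"
    using Suc.IH[of "deriv f" g] Suc.prems Ck_Suc_imp by auto
  moreover have "Ck k (\<lambda>x. f x * deriv g x)"
    using Suc.IH[of f "deriv g"] Suc.prems Ck_Suc_imp by auto
  ultimately show ?case using Ck_add by auto
qed

lemma Ck_refl: "Ck k f \<Longrightarrow> Ck k (\<lambda>x. f (1 - x))"
proof (induction k arbitrary: f)
  case 0 then show ?case by simp
next
  case (Suc k)
  have df: "\<And>x. DERIV f x :> deriv f x"
    using Suc.prems DERIV_deriv_iff_real_differentiable by auto
  have d: "\<And>x. DERIV (\<lambda>x. f (1 - x)) x :> - deriv f (1 - x)"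
  proof -
    fix x
    have "DERIV (\<lambda>x. f (1 - x)) x :> deriv f (1 - x) * (-1)"
      by (rule DERIV_chain2[OF df]) (auto intro!: derivative_eq_intros)
    then show "DERIV (\<lambda>x. f (1 - x)) x :> - deriv f (1 - x)" by simp
  qed
  have "deriv (\<lambda>x. f (1 - x)) = (\<lambda>x. - deriv f (1 - x))"
    by (rule deriv_fun_eq) (rule d)
  moreover have "\<forall>x. (\<lambda>x. f (1 - x)) differentiable (at x)"
    using d real_differentiable_def by blast
  moreover have "Ck k (\<lambda>x. - deriv f (1 - x))"
  proof -
    have "Ck k (\<lambda>x. deriv f (1 - x))" using Suc by auto
    from Ck_cmult[OF this, of "-1"] show ?thesis by simp
  qed
  ultimately show ?case by auto
qed

definition psi :: "real poly \<Rightarrow> real \<Rightarrow> real" where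
  "psi p s = (if s \<le> 0 then 0 else poly p (1/s) * exp (-1/s))"

definition dp :: "real poly \<Rightarrow> real poly" where
  "dp p = [:0,0,1:] * (p - pderiv p)"

lemma poly_exp_lim: "((\<lambda>y::real. poly q y * exp (-y)) \<longlongrightarrow> 0) at_top"
proof -
  have "((\<lambda>y. \<Sum>i\<le>degree q. coeff q i * (y ^ i / exp y)) \<longlongrightarrow> (\<Sum>i\<le>degree q. coeff q i * 0)) at_top"
    by (intro tendsto_sum tendsto_mult tendsto_const tendsto_power_div_exp_0)
  moreover have "(\<lambda>y. \<Sum>i\<le>degree q. coeff q i * (y ^ i / exp y)) = (\<lambda>y. poly q y * exp (-y))"
    by (auto simp: poly_altdef sum_distrib_right exp_minus field_simps sum_divide_distrib)
  ultimately show ?thesis by simp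
qed

lemma psi_deriv_pos:
  assumes "x > 0" shows "DERIV (psi p) x :> psi (dp p) x"
proof -
  have ev: "eventually (\<lambda>s. psi p s = poly p (1/s) * exp (-1/s)) (nhds x)"
    using eventually_nhds_in_open[of "{0<..}" x] assms
    by (auto elim!: eventually_mono simp: psi_def)
  have "DERIV (\<lambda>s. poly p (1/s) * exp (-1/s)) x :>
     poly (pderiv p) (1/x) * (- inverse (x^2)) * exp (-1/x) + poly p (1/x) * (exp (-1/x) * inverse (x^2))"
    using assms
    by (auto intro!: derivative_eq_intros DERIV_chain2[OF poly_DERIV] simp: field_simps power2_eq_square)
  moreover have "poly (pderiv p) (1/x) * (- inverse (x^2)) * exp (-1/x) + poly p (1/x) * (exp (-1/x) * inverse (x^2))
      = psi (dp p) x"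
    using assms by (simp add: psi_def dp_def field_simps power2_eq_square)
  ultimately show ?thesis
    using DERIV_cong_ev[OF refl ev refl] by simp
qed

lemma psi_deriv_neg:
  assumes "x < 0" shows "DERIV (psi p) x :> psi (dp p) x"
proof -
  have ev: "eventually (\<lambda>s. psi p s = 0) (nhds x)"
    using eventually_nhds_in_open[of "{..<0}" x] assms
    by (auto elim!: eventually_mono simp: psi_def)
  have "DERIV (\<lambda>s. 0) x :> 0" by simp
  then have "DERIV (psi p) x :> 0"
    using DERIV_cong_ev[OF refl ev refl] by blast
  moreover have "psi (dp p) x = 0" using assms by (simp add: psi_def)
  ultimately show ?thesis by simp
qed

lemma psi_deriv_0: "DERIV (psi p) 0 :> psi (dp p) 0"
proof -
  have l: "((\<lambda>y::real. poly (p * [:0,1:]) y * exp (-y)) \<longlongrightarrow> 0) at_top"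
    by (rule poly_exp_lim)
  have "((\<lambda>x. poly (p * [:0,1:]) (inverse x) * exp (- inverse x)) \<longlongrightarrow> 0) (at_right 0)"
    using l unfolding filterlim_at_top_to_right .
  then have R: "((\<lambda>h. (psi p (0 + h) - psi p 0) / h) \<longlongrightarrow> 0) (at_right 0)"
    apply (rule Lim_transform_eventually)
    apply (rule eventually_mono[OF eventually_at_right_real[of 0 1]])
    by (auto simp: psi_def field_simps)
  have L: "((\<lambda>h. (psi p (0 + h) - psi p 0) / h) \<longlongrightarrow> 0) (at_left 0)"
    apply (rule Lim_transform_eventually[where f="\<lambda>_. 0"])
     apply simp
    apply (rule eventually_mono[OF eventually_at_left_real[of "-1" 0]])
    by (auto simp: psi_def)
  have "((\<lambda>h. (psi p (0 + h) - psi p 0) / h) \<longlongrightarrow> 0) (at 0)"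
    using filterlim_split_at[OF L R] .
  then show ?thesis by (simp add: DERIV_def psi_def)
qed

lemma psi_deriv: "DERIV (psi p) x :> psi (dp p) x"
  using psi_deriv_0 psi_deriv_neg psi_deriv_pos by (cases "x < 0"; cases "x > 0") auto

lemma Ck_psi: "Ck k (psi p)"
proof (induction k arbitrary: p)
  case 0 then show ?case by simp
next
  case (Suc k)
  have "deriv (psi p) = psi (dp p)" by (rule deriv_fun_eq) (rule psi_deriv)
  moreover have "\<forall>x. psi p differentiable (at x)"
    using psi_deriv real_differentiable_def by blast
  ultimately show ?case using Suc by auto
qed

definition bump :: "real \<Rightarrow> real" where
  "bump s = psi 1 s * psi 1 (1 - s)"

lemma smooth_bump: "smooth bump"
  unfolding smooth_def bump_def
  by (intro allI Ck_mult Ck_psi Ck_refl[of _ "psi 1", simplified])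

lemma bump_nonneg: "bump s \<ge> 0"
  by (auto simp: bump_def psi_def)

lemma bump_zero: "s \<le> 0 \<or> s \<ge> 1 \<Longrightarrow> bump s = 0"
  by (auto simp: bump_def psi_def)

lemma bump_half: "bump (1/2) > 0"
  by (auto simp: bump_def psi_def)

lemma ubp:
  fixes L :: "'i \<Rightarrow> 'a::banach \<Rightarrow> 'b::real_normed_vector"
  assumes bl: "\<And>i. i \<in> I \<Longrightarrow> bounded_linear (L i)"
    and pw: "\<And>x. \<exists>c. \<forall>i\<in>I. norm (L i x) \<le> c"
  shows "\<exists>K. \<forall>i\<in>I. \<forall>x. norm (L i x) \<le> K * norm x"
proof -
  define S where "S n = {x. \<forall>i\<in>I. norm (L i x) \<le> real n}" for n :: nat
  have cl: "closed (S n)" for n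
  proof -
    have "S n = (\<Inter>i\<in>I. {x. norm (L i x) \<le> real n})" by (auto simp: S_def)
    moreover have "closed {x. norm (L i x) \<le> real n}" if "i \<in> I" for i
    proof (rule closed_Collect_le)
      show "continuous_on UNIV (\<lambda>x. norm (L i x))"
        by (intro continuous_on_norm bounded_linear.continuous_on[OF bl[OF that]] continuous_on_id)
    qed simp
    ultimately show ?thesis by auto
  qed
  have cov: "\<Union>(range S) = UNIV"
  proof (rule set_eqI)
    fix x
    obtain c where c: "\<forall>i\<in>I. norm (L i x) \<le> c" using pw by blast
    have "x \<in> S (nat \<lceil>c\<rceil>)" unfolding S_def
    proof (intro CollectI ballI)
      fix i assume "i \<in> I"
      show "norm (L i x) \<le> real (nat \<lceil>c\<rceil>)"
        by (rule order_trans[OF bspec[OF c \<open>i \<in> I\<close>] real_nat_ceiling_ge])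
    qed
    then show "x \<in> \<Union>(range S) \<longleftrightarrow> x \<in> UNIV" by blast
  qed
  have "\<exists>n. interior (S n) \<noteq> {}"
  proof (rule ccontr)
    assume "\<not> (\<exists>n. interior (S n) \<noteq> {})"
    then have e: "\<And>n. interior (S n) = {}" by blast
    have "euclidean interior_of \<Union>(range S) = {}"
    proof (rule Baire_category_alt)
      show "completely_metrizable_space (euclidean :: 'a topology) \<or> locally_compact_space (euclidean :: 'a topology) \<and> regular_space (euclidean :: 'a topology)"
        using completely_metrizable_space_euclidean by blast
      show "countable (range S)" by simp
      fix U assume "U \<in> range S"
      then obtain n where "U = S n" by blast
      then show "closedin euclidean U \<and> euclidean interior_of U = {}"
        using cl e by simp
    qed
    then show False using cov by simp
  qed
  then obtain n x0 where x0: "x0 \<in> interior (S n)" by blast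
  then obtain r where r: "r > 0" "ball x0 r \<subseteq> S n"
    using mem_interior by blast
  have x0S: "x0 \<in> S n" using r by auto
  define K where "K = 4 * real n / r"
  have "\<forall>i\<in>I. \<forall>x. norm (L i x) \<le> K * norm x"
  proof (intro ballI allI)
    fix i x assume i: "i \<in> I"
    interpret l: bounded_linear "L i" by (rule bl[OF i])
    show "norm (L i x) \<le> K * norm x"
    proof (cases "x = 0")
      case True then show ?thesis by simp
    next
      case False
      then have nx: "norm x > 0" by simp
      define c where "c = r / (2 * norm x)"
      have c: "c > 0" using r nx by (simp add: c_def)
      define y where "y = x0 + c *\<^sub>R x"
      have "dist x0 y = c * norm x" using c by (simp add: y_def dist_norm)
      also have "\<dots> = r / 2" using nx by (simp add: c_def)
      finally have "y \<in> ball x0 r" using r by simp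
      then have yS: "y \<in> S n" using r by auto
      have "L i y - L i x0 = c *\<^sub>R L i x" by (simp add: y_def l.add l.scaleR)
      then have "L i x = (1/c) *\<^sub>R (L i y - L i x0)" using c by simp
      then have "norm (L i x) = (1/c) * norm (L i y - L i x0)" using c by simp
      also have "\<dots> \<le> (1/c) * (norm (L i y) + norm (L i x0))"
        using c by (intro mult_left_mono norm_triangle_ineq4) auto
      also have "\<dots> \<le> (1/c) * (real n + real n)"
        using c yS x0S i unfolding S_def by (intro mult_left_mono add_mono) auto
      also have "\<dots> = K * norm x"
        using r nx by (simp add: c_def K_def field_simps)
      finally show ?thesis .
    qed
  qed
  then show ?thesis by blast
qed

lemma neumann:
  fixes E :: "'a::banach \<Rightarrow> 'a"
  assumes E: "bounded_linear E" and q: "\<And>x. norm (E x) \<le> q * norm x" "0 \<le> q" "q < 1"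
  shows "\<exists>N. bounded_linear N \<and> (\<forall>y. N y - E (N y) = y)"
proof -
  interpret e: bounded_linear E by (rule E)
  have uniq: "z = z'" if a: "y + E z = z" "y + E z' = z'" for y z z'
  proof -
    have "z - z' = (y + E z) - (y + E z')" using a by simp
    also have "\<dots> = E z - E z'" by simp
    also have "\<dots> = E (z - z')" by (simp add: e.diff)
    finally have eq: "z - z' = E (z - z')" .
    have "norm (z - z') = norm (E (z - z'))" using eq by (rule arg_cong)
    also have "\<dots> \<le> q * norm (z - z')" by (rule q(1))
    finally have "norm (z - z') \<le> q * norm (z - z')" .
    then have "(1 - q) * norm (z - z') \<le> 0" by (simp add: algebra_simps)
    moreover have "1 - q > 0" using q by simp
    ultimately have "norm (z - z') \<le> 0" by (simp add: mult_le_0_iff)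
    then show ?thesis by simp
  qed
  have ex: "\<exists>z. y + E z = z" for y
  proof -
    have "\<exists>!z. y + E z = z"
    proof (rule banach_fix_type[OF q(2) q(3)])
      show "\<forall>a b. dist (y + E a) (y + E b) \<le> q * dist a b"
      proof (intro allI)
        fix a b
        have "dist (y + E a) (y + E b) = norm (E (a - b))" by (simp add: dist_norm e.diff)
        also have "\<dots> \<le> q * dist a b" using q(1)[of "a - b"] by (simp add: dist_norm)
        finally show "dist (y + E a) (y + E b) \<le> q * dist a b" .
      qed
    qed
    then show ?thesis by blast
  qed
  define N where "N y = (SOME z. y + E z = z)" for y
  have Nf: "y + E (N y) = N y" for y
    unfolding N_def by (rule someI_ex[OF ex])
  have "bounded_linear N"
  proof (rule bounded_linear_intro)
    fix a b
    have "(a + b) + E (N a + N b) = (a + E (N a)) + (b + E (N b))"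
      by (simp add: e.add algebra_simps)
    also have "\<dots> = N a + N b" by (simp only: Nf)
    finally show "N (a + b) = N a + N b" using uniq[OF _ Nf[of "a + b"]] by simp
  next
    fix r a
    have "r *\<^sub>R a + E (r *\<^sub>R N a) = r *\<^sub>R (a + E (N a))"
      by (simp add: e.scaleR scaleR_add_right)
    also have "\<dots> = r *\<^sub>R N a" by (simp only: Nf)
    finally show "N (r *\<^sub>R a) = r *\<^sub>R N a" using uniq[OF _ Nf[of "r *\<^sub>R a"]] by simp
  next
    fix a
    have "norm (N a) = norm (a + E (N a))" by (simp only: Nf)
    also have "\<dots> \<le> norm a + norm (E (N a))" by (rule norm_triangle_ineq)
    also have "\<dots> \<le> norm a + q * norm (N a)" using q(1)[of "N a"] by simp
    finally have "(1 - q) * norm (N a) \<le> norm a" by (simp add: algebra_simps)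
    then show "norm (N a) \<le> norm a * (1 / (1 - q))"
      using q by (simp add: field_simps)
  qed
  moreover have "\<forall>y. N y - E (N y) = y"
  proof
    fix y
    have "N y - E (N y) = (y + E (N y)) - E (N y)" by (simp only: Nf)
    then show "N y - E (N y) = y" by simp
  qed
  ultimately show ?thesis by blast
qed

lemma bl_integral:
  fixes L :: "real \<Rightarrow> 'a::real_normed_vector \<Rightarrow> 'b::banach"
  assumes ab: "a \<le> b" and C: "C \<ge> 0"
    and lin: "\<And>s. s \<in> {a..b} \<Longrightarrow> linear (L s)"
    and bd: "\<And>s x. s \<in> {a..b} \<Longrightarrow> norm (L s x) \<le> C * norm x"
    and cont: "\<And>x. continuous_on {a..b} (\<lambda>s. L s x)"
  shows "bounded_linear (\<lambda>x. integral {a..b} (\<lambda>s. L s x))"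
    and "norm (integral {a..b} (\<lambda>s. L s x)) \<le> C * (b - a) * norm x"
proof -
  have int: "\<And>x. (\<lambda>s. L s x) integrable_on {a..b}"
    using cont integrable_continuous_real by blast
  have nb: "norm (integral {a..b} (\<lambda>s. L s x)) \<le> C * (b - a) * norm x" for x
  proof -
    show ?thesis
      using has_integral_bound[of "C * norm x" "\<lambda>s. L s x" "integral {a..b} (\<lambda>s. L s x)" a b] int[of x] bd C ab
      by (auto simp: has_integral_integral mult_ac)
  qed
  then show "norm (integral {a..b} (\<lambda>s. L s x)) \<le> C * (b - a) * norm x" .
  show "bounded_linear (\<lambda>x. integral {a..b} (\<lambda>s. L s x))"
  proof (rule bounded_linear_intro)
    fix x y
    have "integral {a..b} (\<lambda>s. L s (x + y)) = integral {a..b} (\<lambda>s. L s x + L s y)"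
      by (rule integral_cong) (use lin in \<open>auto simp: linear_add\<close>)
    also have "\<dots> = integral {a..b} (\<lambda>s. L s x) + integral {a..b} (\<lambda>s. L s y)"
      by (rule integral_add[OF int int])
    finally show "integral {a..b} (\<lambda>s. L s (x + y)) = integral {a..b} (\<lambda>s. L s x) + integral {a..b} (\<lambda>s. L s y)" .
  next
    fix r x
    have "integral {a..b} (\<lambda>s. L s (r *\<^sub>R x)) = integral {a..b} (\<lambda>s. r *\<^sub>R L s x)"
      by (rule integral_cong) (use lin in \<open>auto simp: linear_scale\<close>)
    then show "integral {a..b} (\<lambda>s. L s (r *\<^sub>R x)) = r *\<^sub>R integral {a..b} (\<lambda>s. L s x)" by simp
  next
    fix x show "norm (integral {a..b} (\<lambda>s. L s x)) \<le> norm x * (C * (b - a))"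
      using nb[of x] by (simp add: mult_ac)
  qed
qed

lemma tendsto_right0_eps:
  fixes g :: "real \<Rightarrow> 'b::real_normed_vector"
  assumes "\<And>e. e > 0 \<Longrightarrow> \<exists>d>0. \<forall>h. 0 < h \<and> h < d \<longrightarrow> norm (g h - l) \<le> e"
  shows "(g \<longlongrightarrow> l) (at_right 0)"
proof (rule tendstoI)
  fix e :: real assume "e > 0"
  then obtain d where d: "d > 0" "\<forall>h. 0 < h \<and> h < d \<longrightarrow> norm (g h - l) \<le> e/2"
    using assms[of "e/2"] by auto
  show "eventually (\<lambda>h. dist (g h) l < e) (at_right 0)"
    apply (rule eventually_mono[OF eventually_at_right_real[OF d(1)]])
    using d \<open>e > 0\<close> by (force simp: dist_norm)
qed

locale sg =
  fixes T :: "real \<Rightarrow> ('a::banach \<Rightarrow>\<^sub>L 'a)"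
  assumes c0: "c0_semigroup T" and bdd: "bounded_semigroup T"
begin

abbreviation TT :: "real \<Rightarrow> 'a \<Rightarrow> 'a" where "TT s x \<equiv> blinfun_apply (T s) x"

lemma c0_0: "T 0 = id_blinfun" and c0_add: "0 \<le> s \<Longrightarrow> 0 \<le> t \<Longrightarrow> T (s + t) = T s o\<^sub>L T t"
  and c0_cont: "continuous_on {0..} (\<lambda>s. TT s x)"
  using c0 unfolding c0_semigroup_def by auto

definition MM :: real where "MM = (SOME M. \<forall>s\<ge>0. norm (T s) \<le> M)"

lemma normT: "s \<ge> 0 \<Longrightarrow> norm (T s) \<le> MM"
proof -
  have "\<exists>M. \<forall>s\<ge>0. norm (T s) \<le> M" using bdd unfolding bounded_semigroup_def .
  then have "\<forall>s\<ge>0. norm (T s) \<le> MM" unfolding MM_def by (rule someI_ex)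
  then show "s \<ge> 0 \<Longrightarrow> norm (T s) \<le> MM" by blast
qed

lemma MM_nonneg: "MM \<ge> 0"
  using normT[of 0] norm_ge_zero[of "T 0"] by linarith

lemma normTx: "s \<ge> 0 \<Longrightarrow> norm (TT s x) \<le> MM * norm x"
proof -
  assume "s \<ge> 0"
  have "norm (TT s x) \<le> norm (T s) * norm x" by (rule norm_blinfun)
  also have "\<dots> \<le> MM * norm x" by (rule mult_right_mono[OF normT[OF \<open>s \<ge> 0\<close>] norm_ge_zero])
  finally show ?thesis .
qed

lemma T0[simp]: "TT 0 x = x"
  by (simp add: c0_0)

lemma Tadd: "s \<ge> 0 \<Longrightarrow> t \<ge> 0 \<Longrightarrow> TT (s + t) x = TT s (TT t x)"
  by (simp add: c0_add)

lemma Tcomm: "s \<ge> 0 \<Longrightarrow> t \<ge> 0 \<Longrightarrow> TT s (TT t x) = TT t (TT s x)"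
  by (metis Tadd add.commute)

lemma Tcont: "0 \<le> a \<Longrightarrow> continuous_on {a..b} (\<lambda>s. TT s x)"
  by (rule continuous_on_subset[OF c0_cont]) auto

lemma Tint: "0 \<le> a \<Longrightarrow> (\<lambda>s. TT s x) integrable_on {a..b}"
  by (rule integrable_continuous_real[OF Tcont])

definition F :: "'a \<Rightarrow> real \<Rightarrow> 'a" where "F x u = integral {0..u} (\<lambda>s. TT s x)"

lemma F0[simp]: "F x 0 = 0"
  by (simp add: F_def)

lemma F_bl: "u \<ge> 0 \<Longrightarrow> bounded_linear (\<lambda>x. F x u)"
  unfolding F_def
  by (rule bl_integral(1)[where C=MM])
     (simp_all add: MM_nonneg normTx Tcont bounded_linear.linear[OF blinfun.bounded_linear_right])

lemma F_norm: "u \<ge> 0 \<Longrightarrow> norm (F x u) \<le> MM * u * norm x"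
  unfolding F_def
  by (rule bl_integral(2)[where C=MM and a=0 and b=u and L="\<lambda>s x. TT s x", simplified])
     (simp_all add: MM_nonneg normTx Tcont bounded_linear.linear[OF blinfun.bounded_linear_right])

lemma F_cont: "continuous_on {0..L} (F x)"
  unfolding F_def[abs_def]
  by (rule indefinite_integral_continuous_1) (simp add: Tint)

definition dq :: "real \<Rightarrow> 'a \<Rightarrow> 'a" where "dq h x = (1/h) *\<^sub>R (TT h x - x)"

lemma unif_dq:
  assumes "L \<ge> 0" "e > 0"
  shows "\<exists>d>0. \<forall>h. 0 < h \<and> h < d \<longrightarrow> (\<forall>s\<in>{0..L}. norm ((1/h) *\<^sub>R (F x (s+h) - F x s) - TT s x) \<le> e)"
proof -
  have "uniformly_continuous_on {0..L+1} (\<lambda>s. TT s x)"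
    by (rule compact_uniformly_continuous) (auto intro: Tcont)
  then obtain d0 where d0: "d0 > 0" "\<And>r s. r \<in> {0..L+1} \<Longrightarrow> s \<in> {0..L+1} \<Longrightarrow> dist r s < d0 \<Longrightarrow> dist (TT r x) (TT s x) < e"
    unfolding uniformly_continuous_on_def using \<open>e > 0\<close> by metis
  show ?thesis
  proof (intro exI[of _ "min d0 1"] conjI allI impI ballI)
    show "min d0 1 > 0" using d0 by simp
    fix h s assume h: "0 < h \<and> h < min d0 1" and s: "s \<in> {0..L}"
    have comb: "F x s + integral {s..s+h} (\<lambda>r. TT r x) = F x (s+h)"
      unfolding F_def using s h by (intro Henstock_Kurzweil_Integration.integral_combine) (auto intro: Tint)
    have intd: "(\<lambda>r. TT r x - TT s x) integrable_on {s..s+h}"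
      using s by (intro integrable_diff Tint) auto
    have idf: "integral {s..s+h} (\<lambda>r. TT r x - TT s x) = integral {s..s+h} (\<lambda>r. TT r x) - h *\<^sub>R TT s x"
      using s h by (subst integral_diff) (auto intro: Tint)
    have "F x (s+h) - F x s = integral {s..s+h} (\<lambda>r. TT r x)"
      using comb by (metis add_diff_cancel_left')
    also have "\<dots> = integral {s..s+h} (\<lambda>r. TT r x - TT s x) + h *\<^sub>R TT s x"
      unfolding idf by (metis diff_add_cancel)
    finally have i1: "F x (s+h) - F x s = integral {s..s+h} (\<lambda>r. TT r x - TT s x) + h *\<^sub>R TT s x" .
    have eq: "(1/h) *\<^sub>R (F x (s+h) - F x s) - TT s x = (1/h) *\<^sub>R integral {s..s+h} (\<lambda>r. TT r x - TT s x)"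
      unfolding i1 using h by (simp add: scaleR_add_right)
    have pt: "norm (TT r x - TT s x) \<le> e" if "r \<in> cbox s (s+h)" for r
    proof -
      have "dist (TT r x) (TT s x) < e" using that s h by (intro d0(2)) (auto simp: dist_real_def)
      then show "norm (TT r x - TT s x) \<le> e" by (simp add: dist_norm)
    qed
    have hi: "((\<lambda>r. TT r x - TT s x) has_integral integral {s..s+h} (\<lambda>r. TT r x - TT s x)) (cbox s (s+h))"
      using intd by (simp add: has_integral_integral)
    have nI0: "norm (integral {s..s+h} (\<lambda>r. TT r x - TT s x)) \<le> e * measure lborel (cbox s (s+h))"
      by (rule has_integral_bound[OF _ hi pt]) (use \<open>e > 0\<close> in simp)
    have nI: "norm (integral {s..s+h} (\<lambda>r. TT r x - TT s x)) \<le> e * h"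
      using nI0 h by simp
    have "norm ((1/h) *\<^sub>R integral {s..s+h} (\<lambda>r. TT r x - TT s x)) = (1/h) * norm (integral {s..s+h} (\<lambda>r. TT r x - TT s x))"
      using h by simp
    also have "\<dots> \<le> (1/h) * (e * h)"
      using nI h by (intro mult_left_mono) auto
    also have "\<dots> = e" using h by simp
    finally show "norm ((1/h) *\<^sub>R (F x (s+h) - F x s) - TT s x) \<le> e"
      unfolding eq .
  qed
qed

lemma shiftF:
  fixes h s :: real
  assumes "h \<ge> 0" "s \<ge> 0"
  shows "TT h (F x s) = F x (s+h) - F x h"
proof -
  have "TT h (F x s) = integral {0..s} (\<lambda>r. TT h (TT r x))"
    unfolding F_def using integral_linear[OF Tint[where a=0 and b=s and x=x] blinfun.bounded_linear_right[of "T h"]]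
    by (simp add: o_def)
  also have "\<dots> = integral {0..s} ((\<lambda>r. TT r x) \<circ> (+) h)"
    by (rule integral_cong) (use assms in \<open>auto simp: Tadd\<close>)
  also have "\<dots> = integral {h..s+h} (\<lambda>r. TT r x)"
    by (simp add: integral_shift_Icc_real add.commute)
  also have "\<dots> = F x (s+h) - F x h"
    using Henstock_Kurzweil_Integration.integral_combine[of 0 h "s+h" "\<lambda>r. TT r x"] assms Tint[where a=0 and b="s+h" and x=x]
    unfolding F_def by (simp add: algebra_simps)
  finally show ?thesis .
qed

lemma F_comm:
  fixes h s :: real
  assumes "h \<ge> 0" "s \<ge> 0"
  shows "F (TT h x) s = TT h (F x s)"
proof -
  have "F (TT h x) s = integral {0..s} (\<lambda>r. TT h (TT r x))"
    unfolding F_def by (rule integral_cong) (use assms in \<open>auto simp: Tcomm\<close>)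
  also have "\<dots> = TT h (F x s)"
    unfolding F_def using integral_linear[OF Tint[where a=0 and b=s and x=x] blinfun.bounded_linear_right[of "T h"]]
    by (simp add: o_def)
  finally show ?thesis .
qed

lemma dq_F_err:
  assumes "L \<ge> 0" "e > 0"
  shows "\<exists>d>0. \<forall>h. 0 < h \<and> h < d \<longrightarrow> (\<forall>s\<in>{0..L}. norm (dq h (F x s) - (TT s x - x)) \<le> e)"
proof -
  obtain d where d: "d > 0" "\<forall>h. 0 < h \<and> h < d \<longrightarrow> (\<forall>s\<in>{0..L}. norm ((1/h) *\<^sub>R (F x (s+h) - F x s) - TT s x) \<le> e/2)"
    using unif_dq[OF assms(1), of "e/2" x] assms by auto
  show ?thesis
  proof (intro exI[of _ d] conjI allI impI ballI)
    show "d > 0" by fact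
    fix h s assume h: "0 < h \<and> h < d" and s: "s \<in> {0..L}"
    have e1: "norm ((1/h) *\<^sub>R (F x (s+h) - F x s) - TT s x) \<le> e/2" using d h s by blast
    have "0 \<in> {0..L}" using assms by simp
    then have e2: "norm ((1/h) *\<^sub>R (F x (0+h) - F x 0) - TT 0 x) \<le> e/2" using d h by blast
    have e0: "TT h (F x s) = F x (s+h) - F x h" using shiftF[of h s x] h s by auto
    let ?a = "(1/h) *\<^sub>R (F x (s+h) - F x s) - TT s x"
    let ?b = "(1/h) *\<^sub>R (F x (0+h) - F x 0) - TT 0 x"
    have "dq h (F x s) - (TT s x - x) = (1/h) *\<^sub>R (TT h (F x s) - F x s) - (TT s x - x)"
      by (simp only: dq_def)
    also have "\<dots> = (1/h) *\<^sub>R ((F x (s+h) - F x s) - (F x (0+h) - F x 0)) - (TT s x - x)"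
      unfolding e0 F0 add_0_left diff_zero by (simp only: diff_diff_eq add.commute)
    also have "\<dots> = ?a - ?b"
      by (simp only: scaleR_diff_right T0) (simp add: algebra_simps)
    also have "norm (?a - ?b) \<le> e/2 + e/2"
      using norm_triangle_ineq4[of ?a ?b] e1 e2 by linarith
    finally show "norm (dq h (F x s) - (TT s x - x)) \<le> e" by simp
  qed
qed

lemma gen_intro:
  assumes "((\<lambda>h. dq h x) \<longlongrightarrow> l) (at_right 0)"
  shows "x \<in> gen_dom T" "generator T x = l"
proof -
  have a: "((\<lambda>h. (1/h) *\<^sub>R (TT h x - x)) \<longlongrightarrow> l) (at_right 0)"
    using assms unfolding dq_def .
  then show "x \<in> gen_dom T" unfolding gen_dom_def by blast
  show "generator T x = l" unfolding generator_def
    by (rule tendsto_Lim[OF trivial_limit_at_right_real a])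
qed

lemma gen_tendsto:
  assumes "x \<in> gen_dom T"
  shows "((\<lambda>h. dq h x) \<longlongrightarrow> generator T x) (at_right 0)"
proof -
  from assms obtain y where y: "((\<lambda>h. dq h x) \<longlongrightarrow> y) (at_right 0)"
    unfolding gen_dom_def dq_def by auto
  with gen_intro(2)[OF y] show ?thesis by simp
qed

lemma F_gen:
  assumes "t \<ge> 0"
  shows "F x t \<in> gen_dom T" "generator T (F x t) = TT t x - x"
proof -
  have "((\<lambda>h. dq h (F x t)) \<longlongrightarrow> TT t x - x) (at_right 0)"
  proof (rule tendsto_right0_eps)
    fix e :: real assume "e > 0"
    obtain d where d: "d > 0" "\<forall>h. 0 < h \<and> h < d \<longrightarrow> (\<forall>s\<in>{0..t}. norm (dq h (F x s) - (TT s x - x)) \<le> e)"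
      using dq_F_err[OF assms \<open>e > 0\<close>, of x] by blast
    have tt: "t \<in> {0..t}" using assms by simp
    show "\<exists>d>0. \<forall>h. 0 < h \<and> h < d \<longrightarrow> norm (dq h (F x t) - (TT t x - x)) \<le> e"
      using d tt by blast
  qed
  then show "F x t \<in> gen_dom T" "generator T (F x t) = TT t x - x"
    by (rule gen_intro(1), rule gen_intro(2))
qed

lemma gen_F:
  assumes "x \<in> gen_dom T" "t \<ge> 0"
  shows "F (generator T x) t = TT t x - x"
proof -
  have bl: "bounded_linear (\<lambda>x. F x t)" using F_bl assms by auto
  have l1: "((\<lambda>h. F (dq h x) t) \<longlongrightarrow> F (generator T x) t) (at_right 0)"
    using bounded_linear.tendsto[OF bl gen_tendsto[OF assms(1)]] .
  have l2: "((\<lambda>h. F (dq h x) t) \<longlongrightarrow> TT t x - x) (at_right 0)"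
  proof -
    have "eventually (\<lambda>h. dq h (F x t) = F (dq h x) t) (at_right 0)"
    proof (rule eventually_mono[OF eventually_at_right_real[OF zero_less_one]])
      fix h :: real assume "h \<in> {0<..<1}"
      then have h0: "h \<ge> 0" by simp
      have lin: "linear (\<lambda>x. F x t)" using bl bounded_linear.linear by blast
      have "F (dq h x) t = (1/h) *\<^sub>R F (TT h x - x) t"
        by (simp only: dq_def linear_scale[OF lin])
      also have "\<dots> = (1/h) *\<^sub>R (F (TT h x) t - F x t)"
        by (simp only: linear_diff[OF lin])
      also have "\<dots> = dq h (F x t)"
        by (simp only: F_comm[OF h0 assms(2)] dq_def)
      finally show "dq h (F x t) = F (dq h x) t" by simp
    qed
    moreover have "((\<lambda>h. dq h (F x t)) \<longlongrightarrow> TT t x - x) (at_right 0)"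
      using gen_tendsto[OF F_gen(1)[OF assms(2)]] F_gen(2)[OF assms(2)] by simp
    ultimately show ?thesis
      by (rule Lim_transform_eventually[rotated])
  qed
  show ?thesis
    by (rule tendsto_unique[OF trivial_limit_at_right_real l1 l2])
qed

end
lemma cont_bound:
  fixes w :: "real \<Rightarrow> real"
  assumes "continuous_on {a..b} w"
  obtains B where "B > 0" "\<And>s. s \<in> {a..b} \<Longrightarrow> \<bar>w s\<bar> \<le> B"
proof -
  have "bounded (w ` {a..b})"
    by (rule compact_imp_bounded[OF compact_continuous_image[OF assms compact_Icc]])
  then obtain B where "B > 0" "\<forall>y\<in>w ` {a..b}. norm y \<le> B"
    unfolding bounded_pos by blast
  then show ?thesis using that by auto
qed

context sg
begin

lemma TT_cont_comp: "continuous_on S g \<Longrightarrow> continuous_on S (\<lambda>s. TT h (g s))"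
  by (rule bounded_linear.continuous_on[OF blinfun.bounded_linear_right])

lemma Gint:
  assumes L: "L \<ge> 0" and w: "continuous_on {0..L} w"
  shows "integral {0..L} (\<lambda>s. w s *\<^sub>R F x s) \<in> gen_dom T"
    "generator T (integral {0..L} (\<lambda>s. w s *\<^sub>R F x s)) = integral {0..L} (\<lambda>s. w s *\<^sub>R (TT s x - x))"
proof -
  define W where "W = integral {0..L} (\<lambda>s. w s *\<^sub>R F x s)"
  define Gx where "Gx = integral {0..L} (\<lambda>s. w s *\<^sub>R (TT s x - x))"
  obtain B where B: "B > 0" "\<And>s. s \<in> {0..L} \<Longrightarrow> \<bar>w s\<bar> \<le> B"
    using cont_bound[OF w] by blast
  have cF: "continuous_on {0..L} (F x)" by (rule F_cont)
  have i1: "(\<lambda>s. w s *\<^sub>R F x s) integrable_on {0..L}"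
    by (intro integrable_continuous_real continuous_on_scaleR w cF)
  have i2: "(\<lambda>s. w s *\<^sub>R TT h (F x s)) integrable_on {0..L}" for h
    by (intro integrable_continuous_real continuous_on_scaleR w TT_cont_comp cF)
  have dqW: "dq h W = integral {0..L} (\<lambda>s. w s *\<^sub>R dq h (F x s))" if "h > 0" for h
  proof -
    have "TT h W = integral {0..L} (\<lambda>s. TT h (w s *\<^sub>R F x s))"
      unfolding W_def using integral_linear[OF i1 blinfun.bounded_linear_right[of "T h"]]
      by (simp add: o_def)
    also have "\<dots> = integral {0..L} (\<lambda>s. w s *\<^sub>R TT h (F x s))"
      by (simp add: blinfun.scaleR_right)
    finally have tw: "TT h W = integral {0..L} (\<lambda>s. w s *\<^sub>R TT h (F x s))" .
    have "dq h W = (1/h) *\<^sub>R (integral {0..L} (\<lambda>s. w s *\<^sub>R TT h (F x s)) - integral {0..L} (\<lambda>s. w s *\<^sub>R F x s))"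
      unfolding dq_def tw by (simp only: W_def)
    also have "\<dots> = (1/h) *\<^sub>R integral {0..L} (\<lambda>s. w s *\<^sub>R TT h (F x s) - w s *\<^sub>R F x s)"
      by (simp only: integral_diff[OF i2 i1])
    also have "\<dots> = integral {0..L} (\<lambda>s. (1/h) *\<^sub>R (w s *\<^sub>R TT h (F x s) - w s *\<^sub>R F x s))"
      by (simp only: integral_cmul)
    also have "\<dots> = integral {0..L} (\<lambda>s. w s *\<^sub>R dq h (F x s))"
      by (rule integral_cong) (simp add: dq_def scaleR_diff_right)
    finally show ?thesis .
  qed
  have "((\<lambda>h. dq h W) \<longlongrightarrow> Gx) (at_right 0)"
  proof (rule tendsto_right0_eps)
    fix e :: real assume e: "e > 0"
    define eps where "eps = e / (B * (L + 1))"
    have eps: "eps > 0" unfolding eps_def using e B L by simp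
    obtain d where d: "d > 0" "\<forall>h. 0 < h \<and> h < d \<longrightarrow> (\<forall>s\<in>{0..L}. norm (dq h (F x s) - (TT s x - x)) \<le> eps)"
      using dq_F_err[OF L eps, of x] by blast
    show "\<exists>d>0. \<forall>h. 0 < h \<and> h < d \<longrightarrow> norm (dq h W - Gx) \<le> e"
    proof (intro exI[of _ d] conjI allI impI)
      show "d > 0" by fact
      fix h assume h: "0 < h \<and> h < d"
      have i3: "(\<lambda>s. w s *\<^sub>R dq h (F x s)) integrable_on {0..L}"
        unfolding dq_def
        by (intro integrable_continuous_real continuous_on_scaleR w continuous_on_const continuous_on_diff TT_cont_comp cF)
      have i4: "(\<lambda>s. w s *\<^sub>R (TT s x - x)) integrable_on {0..L}"
        by (intro integrable_continuous_real continuous_on_scaleR w continuous_on_const continuous_on_diff Tcont) simp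
      have "dq h W - Gx = integral {0..L} (\<lambda>s. w s *\<^sub>R dq h (F x s) - w s *\<^sub>R (TT s x - x))"
        unfolding dqW[OF conjunct1[OF h]] Gx_def by (simp only: integral_diff[OF i3 i4])
      also have "\<dots> = integral {0..L} (\<lambda>s. w s *\<^sub>R (dq h (F x s) - (TT s x - x)))"
        by (simp only: scaleR_diff_right)
      finally have eq: "dq h W - Gx = integral {0..L} (\<lambda>s. w s *\<^sub>R (dq h (F x s) - (TT s x - x)))" .
      have i5: "(\<lambda>s. w s *\<^sub>R (dq h (F x s) - (TT s x - x))) integrable_on {0..L}"
        using integrable_diff[OF i3 i4] by (simp add: scaleR_diff_right)
      have hi: "((\<lambda>s. w s *\<^sub>R (dq h (F x s) - (TT s x - x))) has_integral
                 integral {0..L} (\<lambda>s. w s *\<^sub>R (dq h (F x s) - (TT s x - x)))) (cbox 0 L)"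
        using i5 by (simp add: has_integral_integral)
      have pt: "norm (w s *\<^sub>R (dq h (F x s) - (TT s x - x))) \<le> B * eps" if "s \<in> cbox 0 L" for s
      proof -
        have s: "s \<in> {0..L}" using that by simp
        have "norm (w s *\<^sub>R (dq h (F x s) - (TT s x - x))) = \<bar>w s\<bar> * norm (dq h (F x s) - (TT s x - x))"
          by simp
        also have "\<dots> \<le> B * eps"
          by (rule mult_mono) (use B s d h in auto)
        finally show ?thesis .
      qed
      have "norm (dq h W - Gx) \<le> (B * eps) * measure lborel (cbox 0 L)"
        unfolding eq by (rule has_integral_bound[OF _ hi pt]) (use B eps in simp)
      also have "\<dots> = B * eps * L" using L by simp
      also have "\<dots> \<le> B * eps * (L + 1)" using B eps by simp
      also have "\<dots> = e" unfolding eps_def using B L by simp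
      finally show "norm (dq h W - Gx) \<le> e" .
    qed
  qed
  then show "integral {0..L} (\<lambda>s. w s *\<^sub>R F x s) \<in> gen_dom T"
    "generator T (integral {0..L} (\<lambda>s. w s *\<^sub>R F x s)) = integral {0..L} (\<lambda>s. w s *\<^sub>R (TT s x - x))"
    unfolding W_def Gx_def by (rule gen_intro(1), rule gen_intro(2))
qed

lemma F_deriv:
  assumes "s \<in> {0..b}"
  shows "(F x has_vector_derivative TT s x) (at s within {0..b})"
proof -
  have "((\<lambda>u. integral {0..u} (\<lambda>s. TT s x)) has_vector_derivative TT s x) (at s within {0..b})"
    by (rule integral_has_vector_derivative[OF Tcont assms]) simp
  then show ?thesis unfolding F_def[abs_def] .
qed

lemma deriv_cont_on:
  assumes "\<And>s. (\<rho> has_real_derivative \<rho>' s) (at s)"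
  shows "continuous_on S \<rho>"
  by (rule continuous_at_imp_continuous_on) (use DERIV_isCont assms in blast)

lemma ibp:
  assumes d: "\<And>s. (\<rho> has_real_derivative \<rho>' s) (at s)" and c: "continuous_on {0..1} \<rho>'"
    and r1: "\<rho> 1 = 0"
  shows "integral {0..1} (\<lambda>s. \<rho> s *\<^sub>R TT s x) = - integral {0..1} (\<lambda>s. \<rho>' s *\<^sub>R F x s)"
proof -
  have cr: "continuous_on {0..1} \<rho>" by (rule deriv_cont_on[OF d])
  have "((\<lambda>s. \<rho> s *\<^sub>R TT s x + \<rho>' s *\<^sub>R F x s) has_integral
          (\<rho> 1 *\<^sub>R F x 1 - \<rho> 0 *\<^sub>R F x 0)) {0..1}"
  proof (rule fundamental_theorem_of_calculus)
    fix s :: real assume s: "s \<in> {0..1}"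
    have "(\<rho> has_real_derivative \<rho>' s) (at s within {0..1})"
      using d has_field_derivative_at_within by blast
    from has_vector_derivative_scaleR[OF this F_deriv[OF s]]
    show "((\<lambda>s. \<rho> s *\<^sub>R F x s) has_vector_derivative \<rho> s *\<^sub>R TT s x + \<rho>' s *\<^sub>R F x s) (at s within {0..1})" .
  qed simp
  then have "integral {0..1} (\<lambda>s. \<rho> s *\<^sub>R TT s x + \<rho>' s *\<^sub>R F x s) = 0"
    using r1 by (simp add: integral_unique)
  moreover have "integral {0..1} (\<lambda>s. \<rho> s *\<^sub>R TT s x + \<rho>' s *\<^sub>R F x s)
      = integral {0..1} (\<lambda>s. \<rho> s *\<^sub>R TT s x) + integral {0..1} (\<lambda>s. \<rho>' s *\<^sub>R F x s)"
    by (intro integral_add integrable_continuous_real continuous_on_scaleR cr c Tcont F_cont) simp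
  ultimately show ?thesis by (simp add: eq_neg_iff_add_eq_0)
qed

definition Jr :: "(real \<Rightarrow> real) \<Rightarrow> 'a \<Rightarrow> 'a" where
  "Jr \<rho> x = integral {0..1} (\<lambda>s. \<rho> s *\<^sub>R TT s x)"

lemma J_gen:
  assumes d: "\<And>s. (\<rho> has_real_derivative \<rho>' s) (at s)" and c: "continuous_on {0..1} \<rho>'"
    and r0: "\<rho> 0 = 0" and r1: "\<rho> 1 = 0"
  shows "Jr \<rho> x \<in> gen_dom T" "generator T (Jr \<rho> x) = - Jr \<rho>' x"
proof -
  have e: "Jr \<rho> x = integral {0..1} (\<lambda>s. (- \<rho>' s) *\<^sub>R F x s)"
    unfolding Jr_def ibp[OF d c r1] by simp
  have cm: "continuous_on {0..1} (\<lambda>s. - \<rho>' s)" by (intro continuous_on_minus c)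
  show "Jr \<rho> x \<in> gen_dom T" unfolding e by (rule Gint(1)[OF _ cm]) simp
  have "generator T (Jr \<rho> x) = integral {0..1} (\<lambda>s. (- \<rho>' s) *\<^sub>R (TT s x - x))"
    unfolding e by (rule Gint(2)[OF _ cm]) simp
  also have "\<dots> = integral {0..1} (\<lambda>s. \<rho>' s *\<^sub>R x - \<rho>' s *\<^sub>R TT s x)"
    by (rule integral_cong) (simp add: algebra_simps)
  also have "\<dots> = integral {0..1} (\<lambda>s. \<rho>' s *\<^sub>R x) - integral {0..1} (\<lambda>s. \<rho>' s *\<^sub>R TT s x)"
    by (intro integral_diff integrable_continuous_real continuous_on_scaleR c Tcont continuous_on_const) simp
  also have "integral {0..1} (\<lambda>s. \<rho>' s *\<^sub>R x) = integral {0..1} \<rho>' *\<^sub>R x"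
    by (rule integral_unique[OF has_integral_scaleR_left[OF integrable_integral[OF integrable_continuous_real[OF c]]]])
  also have "integral {0..1} \<rho>' = \<rho> 1 - \<rho> 0"
  proof (rule integral_unique, rule fundamental_theorem_of_calculus)
    fix s :: real assume "s \<in> {0..1}"
    show "(\<rho> has_vector_derivative \<rho>' s) (at s within {0..1})"
      using d has_field_derivative_at_within has_real_derivative_iff_has_vector_derivative by blast
  qed simp
  finally show "generator T (Jr \<rho> x) = - Jr \<rho>' x"
    using r0 r1 by (simp add: Jr_def)
qed

definition Ut :: "real \<Rightarrow> 'a \<Rightarrow> 'a" where
  "Ut t x = integral {0..t} (\<lambda>s. (1/t) *\<^sub>R F x s)"

lemma cesaro_F: "cesaro T t x = (1/t) *\<^sub>R F x t"
  by (simp add: cesaro_def F_def)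

lemma U_gen:
  assumes t: "t > 0"
  shows "Ut t x \<in> gen_dom T" "generator T (Ut t x) = cesaro T t x - x"
proof -
  have cw: "continuous_on {0..t} (\<lambda>s. 1/t)" by simp
  show "Ut t x \<in> gen_dom T" unfolding Ut_def by (rule Gint(1)[OF _ cw]) (use t in simp)
  have "generator T (Ut t x) = integral {0..t} (\<lambda>s. (1/t) *\<^sub>R (TT s x - x))"
    unfolding Ut_def by (rule Gint(2)[OF _ cw]) (use t in simp)
  also have "\<dots> = (1/t) *\<^sub>R integral {0..t} (\<lambda>s. TT s x - x)"
    by (rule integral_cmul)
  also have "integral {0..t} (\<lambda>s. TT s x - x) = F x t - integral {0..t} (\<lambda>s. x)"
    unfolding F_def by (intro integral_diff Tint integrable_const_ivl) simp
  also have "integral {0..t} (\<lambda>s. x) = t *\<^sub>R x" using t by simp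
  finally show "generator T (Ut t x) = cesaro T t x - x"
    using t by (simp add: cesaro_F scaleR_diff_right)
qed

definition Wr :: "(real \<Rightarrow> real) \<Rightarrow> 'a \<Rightarrow> 'a" where
  "Wr \<rho> x = integral {0..1} (\<lambda>s. \<rho> s *\<^sub>R F x s)"

lemma W_gen:
  assumes c: "continuous_on {0..1} \<rho>"
  shows "Wr \<rho> x \<in> gen_dom T" "generator T (Wr \<rho> x) = Jr \<rho> x - integral {0..1} \<rho> *\<^sub>R x"
proof -
  show "Wr \<rho> x \<in> gen_dom T" unfolding Wr_def by (rule Gint(1)[OF _ c]) simp
  have "generator T (Wr \<rho> x) = integral {0..1} (\<lambda>s. \<rho> s *\<^sub>R (TT s x - x))"
    unfolding Wr_def by (rule Gint(2)[OF _ c]) simp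
  also have "\<dots> = integral {0..1} (\<lambda>s. \<rho> s *\<^sub>R TT s x - \<rho> s *\<^sub>R x)"
    by (rule integral_cong) (simp add: algebra_simps)
  also have "\<dots> = integral {0..1} (\<lambda>s. \<rho> s *\<^sub>R TT s x) - integral {0..1} (\<lambda>s. \<rho> s *\<^sub>R x)"
    by (intro integral_diff integrable_continuous_real continuous_on_scaleR c Tcont continuous_on_const) simp
  also have "integral {0..1} (\<lambda>s. \<rho> s *\<^sub>R x) = integral {0..1} \<rho> *\<^sub>R x"
    by (rule integral_unique[OF has_integral_scaleR_left[OF integrable_integral[OF integrable_continuous_real[OF c]]]])
  finally show "generator T (Wr \<rho> x) = Jr \<rho> x - integral {0..1} \<rho> *\<^sub>R x"
    by (simp add: Jr_def)
qed

lemma lin_TT: "linear (\<lambda>x. c *\<^sub>R TT s x)"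
  by (intro linearI) (simp_all add: blinfun.bilinear_simps scaleR_add_right)

lemma Jr_bl:
  assumes c: "continuous_on {0..1} \<rho>"
  shows "bounded_linear (Jr \<rho>)"
proof -
  obtain B where B: "B > 0" "\<And>s. s \<in> {0..1} \<Longrightarrow> \<bar>\<rho> s\<bar> \<le> B" using cont_bound[OF c] by blast
  have "bounded_linear (\<lambda>x. integral {0..1} (\<lambda>s. \<rho> s *\<^sub>R TT s x))"
  proof (rule bl_integral(1)[where C="B * MM"])
    show "0 \<le> B * MM" using B MM_nonneg by simp
    fix s :: real and x :: 'a assume s: "s \<in> {0..1}"
    have "norm (\<rho> s *\<^sub>R TT s x) = \<bar>\<rho> s\<bar> * norm (TT s x)" by simp
    also have "\<dots> \<le> B * (MM * norm x)"
      by (rule mult_mono) (use B s normTx[of s x] in auto)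
    finally show "norm (\<rho> s *\<^sub>R TT s x) \<le> B * MM * norm x" by (simp add: mult_ac)
  qed (auto intro: lin_TT continuous_on_scaleR c Tcont)
  then show ?thesis unfolding Jr_def[abs_def] .
qed

lemma Wr_bl:
  assumes c: "continuous_on {0..1} \<rho>"
  shows "bounded_linear (Wr \<rho>)"
proof -
  obtain B where B: "B > 0" "\<And>s. s \<in> {0..1} \<Longrightarrow> \<bar>\<rho> s\<bar> \<le> B" using cont_bound[OF c] by blast
  have "bounded_linear (\<lambda>x. integral {0..1} (\<lambda>s. \<rho> s *\<^sub>R F x s))"
  proof (rule bl_integral(1)[where C="B * MM"])
    show "0 \<le> B * MM" using B MM_nonneg by simp
    fix s :: real and x :: 'a assume s: "s \<in> {0..1}"
    have "norm (\<rho> s *\<^sub>R F x s) = \<bar>\<rho> s\<bar> * norm (F x s)" by simp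
    also have "\<dots> \<le> B * (MM * s * norm x)"
      by (rule mult_mono) (use B s F_norm[of s x] in auto)
    also have "\<dots> \<le> B * (MM * 1 * norm x)"
      using B s MM_nonneg by (intro mult_left_mono mult_right_mono) auto
    finally show "norm (\<rho> s *\<^sub>R F x s) \<le> B * MM * norm x" by (simp add: mult_ac)
  next
    fix s :: real assume s: "s \<in> {0..1}"
    show "linear (\<lambda>x. \<rho> s *\<^sub>R F x s)"
      using bounded_linear.linear[OF bounded_linear_compose[OF bounded_linear_scaleR_right F_bl]] s by simp
  qed (auto intro: continuous_on_scaleR c F_cont)
  then show ?thesis unfolding Wr_def[abs_def] .
qed

lemma Ut_bl:
  assumes t: "t > 0"
  shows "bounded_linear (Ut t)"
proof -
  have "bounded_linear (\<lambda>x. integral {0..t} (\<lambda>s. (1/t) *\<^sub>R F x s))"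
  proof (rule bl_integral(1)[where C="MM"])
    show "0 \<le> t" using t by simp
    show "0 \<le> MM" using MM_nonneg by simp
    fix s :: real and x :: 'a assume s: "s \<in> {0..t}"
    have "norm ((1/t) *\<^sub>R F x s) = (1/t) * norm (F x s)" using t by simp
    also have "\<dots> \<le> (1/t) * (MM * s * norm x)"
      by (rule mult_left_mono) (use t s F_norm[of s x] in auto)
    also have "\<dots> \<le> (1/t) * (MM * t * norm x)"
      using t s MM_nonneg by (intro mult_left_mono mult_right_mono) auto
    also have "\<dots> = MM * norm x" using t by simp
    finally show "norm ((1/t) *\<^sub>R F x s) \<le> MM * norm x" .
  next
    fix s :: real assume s: "s \<in> {0..t}"
    show "linear (\<lambda>x. (1/t) *\<^sub>R F x s)"
      using bounded_linear.linear[OF bounded_linear_compose[OF bounded_linear_scaleR_right F_bl]] s by simp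
  qed (auto intro: continuous_on_scaleR F_cont)
  then show ?thesis unfolding Ut_def[abs_def] .
qed

lemma cesaro_bl:
  assumes t: "t > 0"
  shows "bounded_linear (cesaro T t)" "norm (cesaro T t x) \<le> MM * norm x"
proof -
  have "bounded_linear (\<lambda>x. (1/t) *\<^sub>R F x t)"
    using bounded_linear_compose[OF bounded_linear_scaleR_right F_bl] t by simp
  then show "bounded_linear (cesaro T t)" unfolding cesaro_F[abs_def] .
  have "norm (cesaro T t x) = (1/t) * norm (F x t)" using t by (simp add: cesaro_F)
  also have "\<dots> \<le> (1/t) * (MM * t * norm x)"
    by (rule mult_left_mono) (use t F_norm[of t x] in auto)
  also have "\<dots> = MM * norm x" using t by simp
  finally show "norm (cesaro T t x) \<le> MM * norm x" .
qed

lemma gen_diff: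
  assumes "x \<in> gen_dom T" "y \<in> gen_dom T"
  shows "x - y \<in> gen_dom T" "generator T (x - y) = generator T x - generator T y"
proof -
  have e: "dq h (x - y) = dq h x - dq h y" for h
    by (simp add: dq_def blinfun.bilinear_simps scaleR_diff_right algebra_simps)
  have "((\<lambda>h. dq h (x - y)) \<longlongrightarrow> generator T x - generator T y) (at_right 0)"
    unfolding e by (intro tendsto_diff gen_tendsto assms)
  then show "x - y \<in> gen_dom T" "generator T (x - y) = generator T x - generator T y"
    by (rule gen_intro(1), rule gen_intro(2))
qed

lemma gen_add:
  assumes "x \<in> gen_dom T" "y \<in> gen_dom T"
  shows "x + y \<in> gen_dom T" "generator T (x + y) = generator T x + generator T y"
proof -
  have e: "dq h (x + y) = dq h x + dq h y" for h
    by (simp add: dq_def blinfun.bilinear_simps scaleR_add_right algebra_simps)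
  have "((\<lambda>h. dq h (x + y)) \<longlongrightarrow> generator T x + generator T y) (at_right 0)"
    unfolding e by (intro tendsto_add gen_tendsto assms)
  then show "x + y \<in> gen_dom T" "generator T (x + y) = generator T x + generator T y"
    by (rule gen_intro(1), rule gen_intro(2))
qed

lemma gen_zero_fix:
  assumes "x \<in> gen_dom T" "generator T x = 0" "s \<ge> 0"
  shows "TT s x = x"
proof -
  have "F 0 s = TT s x - x" using gen_F[OF assms(1) assms(3)] assms(2) by simp
  moreover have "F 0 s = 0" by (simp add: F_def)
  ultimately show ?thesis by simp
qed

lemma fix_J:
  assumes "\<And>s. s \<ge> 0 \<Longrightarrow> TT s z = z" and c: "continuous_on {0..1} \<rho>"
  shows "Jr \<rho> z = integral {0..1} \<rho> *\<^sub>R z"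
proof -
  have "Jr \<rho> z = integral {0..1} (\<lambda>s. \<rho> s *\<^sub>R z)"
    unfolding Jr_def by (rule integral_cong) (simp add: assms)
  also have "\<dots> = integral {0..1} \<rho> *\<^sub>R z"
    by (rule integral_unique[OF has_integral_scaleR_left[OF integrable_integral[OF integrable_continuous_real[OF c]]]])
  finally show ?thesis .
qed

lemma fix_C:
  assumes "\<And>s. s \<ge> 0 \<Longrightarrow> TT s z = z" "t > 0"
  shows "cesaro T t z = z"
proof -
  have "F z t = integral {0..t} (\<lambda>s. z)"
    unfolding F_def by (rule integral_cong) (simp add: assms)
  also have "\<dots> = t *\<^sub>R z" using assms by simp
  finally show ?thesis using assms by (simp add: cesaro_F)
qed

end

lemma deriv_cont_on':
  assumes "\<And>s. (\<rho> has_real_derivative \<rho>' s) (at s)"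
  shows "continuous_on S \<rho>"
  by (rule continuous_at_imp_continuous_on) (use DERIV_isCont assms in blast)

definition Sm :: "(real \<Rightarrow> real) \<Rightarrow> bool" where
  "Sm \<rho> \<longleftrightarrow> smooth \<rho> \<and> (\<forall>s. (s \<le> 0 \<or> s \<ge> 1) \<longrightarrow> \<rho> s = 0)"

lemma smooth_deriv: "smooth \<rho> \<Longrightarrow> smooth (deriv \<rho>)"
  unfolding smooth_def
proof
  fix k assume "\<forall>k. Ck k \<rho>"
  then have "Ck (Suc k) \<rho>" by blast
  then show "Ck k (deriv \<rho>)" by simp
qed

lemma smooth_DERIV: "smooth \<rho> \<Longrightarrow> DERIV \<rho> x :> deriv \<rho> x"
proof -
  assume "smooth \<rho>"
  then have "Ck (Suc 0) \<rho>" unfolding smooth_def by blast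
  then have "\<rho> differentiable (at x)" by simp
  then show ?thesis by (simp add: DERIV_deriv_iff_real_differentiable)
qed

lemma deriv_zero_left:
  fixes f :: "real \<Rightarrow> real"
  assumes d: "DERIV f a :> D" and ev: "eventually (\<lambda>h. f (a + h) = f a) (at_left 0)"
  shows "D = 0"
proof -
  have l0: "((\<lambda>h. (f (a + h) - f a) / h) \<longlongrightarrow> D) (at 0)" using d by (simp add: DERIV_def)
  have l1: "((\<lambda>h. (f (a + h) - f a) / h) \<longlongrightarrow> D) (at_left 0)"
    by (rule tendsto_mono[OF at_le[OF subset_UNIV] l0])
  have l2: "((\<lambda>h. (f (a + h) - f a) / h) \<longlongrightarrow> 0) (at_left 0)"
    by (rule Lim_transform_eventually[OF tendsto_const]) (rule eventually_mono[OF ev], simp)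
  show ?thesis by (rule tendsto_unique[OF trivial_limit_at_left_real l1 l2])
qed

lemma deriv_zero_right:
  fixes f :: "real \<Rightarrow> real"
  assumes d: "DERIV f a :> D" and ev: "eventually (\<lambda>h. f (a + h) = f a) (at_right 0)"
  shows "D = 0"
proof -
  have l0: "((\<lambda>h. (f (a + h) - f a) / h) \<longlongrightarrow> D) (at 0)" using d by (simp add: DERIV_def)
  have l1: "((\<lambda>h. (f (a + h) - f a) / h) \<longlongrightarrow> D) (at_right 0)"
    by (rule tendsto_mono[OF at_le[OF subset_UNIV] l0])
  have l2: "((\<lambda>h. (f (a + h) - f a) / h) \<longlongrightarrow> 0) (at_right 0)"
    by (rule Lim_transform_eventually[OF tendsto_const]) (rule eventually_mono[OF ev], simp)
  show ?thesis by (rule tendsto_unique[OF trivial_limit_at_right_real l1 l2])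
qed

lemma deriv_zero_open:
  assumes d: "DERIV f a :> D" and ev: "eventually (\<lambda>x. f x = 0) (nhds a)"
  shows "D = 0"
proof -
  have "DERIV (\<lambda>x. 0) a :> 0" by simp
  then have "DERIV f a :> 0" using DERIV_cong_ev[OF refl ev refl] by blast
  then show ?thesis using DERIV_unique d by blast
qed

lemma Sm_deriv:
  assumes "Sm \<rho>" shows "Sm (deriv \<rho>)"
proof -
  have sm: "smooth \<rho>" and z: "\<And>s. s \<le> 0 \<or> s \<ge> 1 \<Longrightarrow> \<rho> s = 0" using assms by (auto simp: Sm_def)
  have d: "\<And>x. DERIV \<rho> x :> deriv \<rho> x" using smooth_DERIV[OF sm] .
  have "deriv \<rho> s = 0" if s: "s \<le> 0 \<or> s \<ge> 1" for s
  proof -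
    consider "s < 0" | "s = 0" | "s = 1" | "s > 1" using s by linarith
    then show ?thesis
    proof cases
      case 1
      have "eventually (\<lambda>x. \<rho> x = 0) (nhds s)"
        using eventually_nhds_in_open[of "{..<0}" s] 1 by (auto elim!: eventually_mono intro: z)
      then show ?thesis by (rule deriv_zero_open[OF d])
    next
      case 4
      have "eventually (\<lambda>x. \<rho> x = 0) (nhds s)"
        using eventually_nhds_in_open[of "{1<..}" s] 4 by (auto elim!: eventually_mono intro: z)
      then show ?thesis by (rule deriv_zero_open[OF d])
    next
      case 2
      have "eventually (\<lambda>h. \<rho> (0 + h) = \<rho> 0) (at_left 0)"
      proof (rule eventually_mono[OF eventually_at_left_real[of "-1" 0]])
        fix h :: real assume "h \<in> {-1<..<0}"
        then have "0 + h \<le> 0" by simp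
        then show "\<rho> (0 + h) = \<rho> 0" using z[of "0 + h"] z[of 0] by simp
      qed simp
      then show ?thesis using deriv_zero_left[OF d[of 0]] 2 by simp
    next
      case 3
      have "eventually (\<lambda>h. \<rho> (1 + h) = \<rho> 1) (at_right 0)"
      proof (rule eventually_mono[OF eventually_at_right_real[of 0 1]])
        fix h :: real assume "h \<in> {0<..<1}"
        then have "1 + h \<ge> 1" by simp
        then show "\<rho> (1 + h) = \<rho> 1" using z[of "1 + h"] z[of 1] by simp
      qed simp
      then show ?thesis using deriv_zero_right[OF d[of 1]] 3 by simp
    qed
  qed
  then show ?thesis using smooth_deriv[OF sm] by (simp add: Sm_def)
qed

lemma smooth_cont_deriv: "smooth \<rho> \<Longrightarrow> continuous_on S (deriv \<rho>)"
proof -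
  assume "smooth \<rho>"
  then have "smooth (deriv \<rho>)" by (rule smooth_deriv)
  then have "\<And>x. DERIV (deriv \<rho>) x :> deriv (deriv \<rho>) x" by (rule smooth_DERIV)
  then show ?thesis by (rule deriv_cont_on')
qed

lemma smooth_cont: "smooth \<rho> \<Longrightarrow> continuous_on S \<rho>"
  by (rule deriv_cont_on'[OF smooth_DERIV])

context sg
begin

lemma J_dom_pow:
  "\<forall>\<sigma>. Sm \<sigma> \<longrightarrow> Jr \<sigma> x \<in> dom_pow (gen_dom T) (\<lambda>x. - generator T x) n"
proof (induction n)
  case 0 then show ?case by simp
next
  case (Suc n)
  show ?case
  proof (intro allI impI)
    fix \<sigma> assume s: "Sm \<sigma>"
    have sm: "smooth \<sigma>" and z: "\<And>s. s \<le> 0 \<or> s \<ge> 1 \<Longrightarrow> \<sigma> s = 0" using s by (auto simp: Sm_def)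
    have d: "\<And>x. DERIV \<sigma> x :> deriv \<sigma> x" using smooth_DERIV[OF sm] .
    have c: "continuous_on {0..1} (deriv \<sigma>)" using smooth_cont_deriv[OF sm] .
    note jg = J_gen[OF d c z[of 0] z[of 1]]
    have "- generator T (Jr \<sigma> x) = Jr (deriv \<sigma>) x" using jg(2)[of x] by simp
    moreover have "Jr (deriv \<sigma>) x \<in> dom_pow (gen_dom T) (\<lambda>x. - generator T x) n"
      using Suc.IH Sm_deriv[OF s] by blast
    ultimately show "Jr \<sigma> x \<in> dom_pow (gen_dom T) (\<lambda>x. - generator T x) (Suc n)"
      using jg(1)[of x] by simp
  qed
qed

lemma J_dom_inf:
  assumes "Sm \<sigma>" shows "Jr \<sigma> x \<in> dom_inf (gen_dom T) (\<lambda>x. - generator T x)"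
  unfolding dom_inf_def using J_dom_pow assms by blast

end

lemma bump_int_pos: "integral {0..1} bump > 0"
proof -
  have c: "continuous_on {0..1} bump" using smooth_cont[OF smooth_bump] .
  have i: "bump integrable_on {0..1}" by (rule integrable_continuous_real[OF c])
  have ge: "integral {0..1} bump \<ge> 0"
    by (rule integral_nonneg[OF i]) (simp add: bump_nonneg)
  have "integral {0..1} bump \<noteq> 0"
  proof
    assume "integral {0..1} bump = 0"
    then have hi: "(bump has_integral 0) (cbox 0 1)"
      using i by (metis box_real(2) has_integral_integral)
    have "bump (1/2) = 0"
      by (rule has_integral_0_cbox_imp_0[OF _ _ hi]) (use c bump_nonneg in auto)
    then show False using bump_half by simp
  qed
  then show ?thesis using ge by simp
qed

theorem theoremA1:
  fixes T :: "real \<Rightarrow> ('a::banach \<Rightarrow>\<^sub>L 'a)"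
    and \<phi> :: "real \<Rightarrow> real"
  defines "A \<equiv> (\<lambda>x. - generator T x)"
  assumes "c0_semigroup T"
    and "bounded_semigroup T"
    and "\<forall>t>0. \<phi> t > 0"
    and "\<forall>s t. 0 < s \<longrightarrow> s \<le> t \<longrightarrow> \<phi> t \<le> \<phi> s"
    and "(\<phi> \<longlongrightarrow> 0) at_top"
    and "\<forall>x \<in> dom_inf (gen_dom T) A. (\<lambda>t. norm (cesaro T t x)) \<in> O[at_top](\<phi>)"
  shows "\<exists>B :: 'a \<Rightarrow>\<^sub>L 'a. (\<forall>y. blinfun_apply B y \<in> gen_dom T \<and> A (blinfun_apply B y) = y)
                          \<and> (\<forall>x \<in> gen_dom T. blinfun_apply B (A x) = x)"
proof -
  interpret sg T using assms(2,3) by unfold_locales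
  note phipos = assms(4)[rule_format] and phimono = assms(5)[rule_format]
  define c0 where "c0 = integral {0..1} bump"
  have c0: "c0 > 0" unfolding c0_def by (rule bump_int_pos)
  define \<rho> where "\<rho> s = (1/c0) * bump s" for s
  have sm\<rho>: "smooth \<rho>" unfolding \<rho>_def[abs_def] smooth_def
    using smooth_bump unfolding smooth_def by (blast intro: Ck_cmult)
  have S\<rho>: "Sm \<rho>" unfolding Sm_def using sm\<rho> bump_zero by (simp add: \<rho>_def)
  have c\<rho>: "continuous_on {0..1} \<rho>" by (rule smooth_cont[OF sm\<rho>])
  have int\<rho>: "integral {0..1} \<rho> = 1"
  proof -
    have "integral {0..1} \<rho> = (1/c0) * integral {0..1} bump"
      unfolding \<rho>_def by (simp add: integral_mult)
    then show ?thesis using c0 by (simp add: c0_def)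
  qed
  define J where "J = Jr \<rho>"
  have Jbl: "bounded_linear J" unfolding J_def by (rule Jr_bl[OF c\<rho>])
  have Jdom: "J x \<in> dom_inf (gen_dom T) A" for x
    unfolding J_def A_def by (rule J_dom_inf[OF S\<rho>])
  define L where "L t x = (1 / \<phi> t) *\<^sub>R cesaro T t (J x)" for t x
  have Lbl: "bounded_linear (L t)" if "t \<in> {1..}" for t
  proof -
    have t: "t > 0" using that by simp
    have "bounded_linear (\<lambda>x. cesaro T t (J x))"
      by (rule bounded_linear_compose[OF cesaro_bl(1)[OF t] Jbl])
    then show ?thesis unfolding L_def[abs_def]
      by (rule bounded_linear_compose[OF bounded_linear_scaleR_right])
  qed
  have Lpw: "\<exists>c. \<forall>t\<in>{1..}. norm (L t x) \<le> c" for x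
  proof -
    have "(\<lambda>t. norm (cesaro T t (J x))) \<in> O[at_top](\<phi>)" using assms(7) Jdom by blast
    then obtain c where c: "c > 0" "eventually (\<lambda>t. norm (norm (cesaro T t (J x))) \<le> c * norm (\<phi> t)) at_top"
      by (rule landau_o.bigE)
    then obtain N where N: "\<And>t. t \<ge> N \<Longrightarrow> norm (cesaro T t (J x)) \<le> c * norm (\<phi> t)"
      by (auto simp: eventually_at_top_linorder)
    define N' where "N' = max N 1"
    have N'pos: "\<phi> N' > 0" using phipos[of N'] by (simp add: N'_def)
    define c' where "c' = max c (MM * norm (J x) / \<phi> N')"
    have "norm (L t x) \<le> c'" if t: "t \<in> {1..}" for t
    proof -
      have t0: "t > 0" using t by simp
      have pt: "\<phi> t > 0" using phipos t0 by blast
      have nL: "norm (L t x) = norm (cesaro T t (J x)) / \<phi> t"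
        using pt by (simp add: L_def)
      show ?thesis
      proof (cases "t \<ge> N'")
        case True
        then have "norm (cesaro T t (J x)) \<le> c * \<phi> t"
          using N[of t] pt by (simp add: N'_def)
        then have "norm (cesaro T t (J x)) / \<phi> t \<le> c"
          using pt by (simp add: divide_le_eq)
        then show ?thesis unfolding nL c'_def by linarith
      next
        case False
        then have "\<phi> N' \<le> \<phi> t" using phimono[of t N'] t0 by simp
        have "norm (cesaro T t (J x)) \<le> MM * norm (J x)" by (rule cesaro_bl(2)[OF t0])
        also have "\<dots> = (MM * norm (J x) / \<phi> N') * \<phi> N'" using N'pos by simp
        also have "\<dots> \<le> (MM * norm (J x) / \<phi> N') * \<phi> t"
          using \<open>\<phi> N' \<le> \<phi> t\<close> N'pos MM_nonneg by (intro mult_left_mono) auto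
        finally have "norm (cesaro T t (J x)) / \<phi> t \<le> MM * norm (J x) / \<phi> N'"
          using pt by (simp add: divide_le_eq)
        then show ?thesis unfolding nL c'_def by linarith
      qed
    qed
    then show ?thesis by blast
  qed
  obtain K where K: "\<And>t x. t \<in> {1..} \<Longrightarrow> norm (L t x) \<le> K * norm x"
    using ubp[of "{1..}" L, OF Lbl Lpw] by blast
  have CJ: "norm (cesaro T t (J x)) \<le> K * \<phi> t * norm x" if "t \<ge> 1" for t x
  proof -
    have pt: "\<phi> t > 0" using phipos that by simp
    have "norm (cesaro T t (J x)) = \<phi> t * norm (L t x)" using pt by (simp add: L_def)
    also have "\<dots> \<le> \<phi> t * (K * norm x)" using K[of t x] that pt by (intro mult_left_mono) auto
    finally show ?thesis by (simp add: mult_ac)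
  qed
  have "eventually (\<lambda>t. \<phi> t < 1 / (2 * (\<bar>K\<bar> + 1))) at_top"
    using assms(6) by (rule order_tendstoD) simp
  then obtain N where N: "\<And>t. t \<ge> N \<Longrightarrow> \<phi> t < 1 / (2 * (\<bar>K\<bar> + 1))"
    by (auto simp: eventually_at_top_linorder)
  define t0 where "t0 = max N 1"
  have t01: "t0 \<ge> 1" and t0pos: "t0 > 0" by (auto simp: t0_def)
  have phit0: "\<phi> t0 < 1 / (2 * (\<bar>K\<bar> + 1))" "\<phi> t0 > 0"
    using N[of t0] phipos[of t0] by (auto simp: t0_def)
  define E where "E x = cesaro T t0 (J x)" for x
  have Ebl: "bounded_linear E" unfolding E_def[abs_def]
    by (rule bounded_linear_compose[OF cesaro_bl(1)[OF t0pos] Jbl])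
  have Eq: "norm (E x) \<le> (1/2) * norm x" for x
  proof -
    have "norm (E x) \<le> K * \<phi> t0 * norm x" unfolding E_def by (rule CJ[OF t01])
    also have "\<dots> \<le> (\<bar>K\<bar> * \<phi> t0) * norm x"
      using phit0 by (intro mult_right_mono) auto
    also have "\<bar>K\<bar> * \<phi> t0 \<le> 1/2"
    proof -
      have "(\<bar>K\<bar> + 1) * \<phi> t0 < (\<bar>K\<bar> + 1) * (1 / (2 * (\<bar>K\<bar> + 1)))"
        using phit0 by (intro mult_strict_left_mono) auto
      also have "\<dots> = 1/2" by simp
      finally show ?thesis using phit0 by (simp add: algebra_simps)
    qed
    then have "(\<bar>K\<bar> * \<phi> t0) * norm x \<le> (1/2) * norm x" by (intro mult_right_mono) auto
    finally show ?thesis .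
  qed
  obtain NN where NN: "bounded_linear NN" "\<And>y. NN y - E (NN y) = y"
    using neumann[OF Ebl Eq] by force
  define Q where "Q x = Wr \<rho> x + Ut t0 (J x)" for x
  have Qbl: "bounded_linear Q" unfolding Q_def[abs_def]
    by (intro bounded_linear_add Wr_bl[OF c\<rho>] bounded_linear_compose[OF Ut_bl[OF t0pos] Jbl])
  have Qdom: "Q z \<in> gen_dom T" and AQ: "A (Q z) = z - E z" for z
  proof -
    note w = W_gen[OF c\<rho>, of z] and u = U_gen[OF t0pos, of "J z"]
    show "Q z \<in> gen_dom T" unfolding Q_def by (rule gen_add(1)[OF w(1) u(1)])
    have "generator T (Q z) = generator T (Wr \<rho> z) + generator T (Ut t0 (J z))"
      unfolding Q_def by (rule gen_add(2)[OF w(1) u(1)])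
    also have "\<dots> = (J z - z) + (E z - J z)"
      using w(2) u(2) int\<rho> by (simp add: J_def E_def)
    finally show "A (Q z) = z - E z" by (simp add: A_def)
  qed
  define B where "B = Blinfun (\<lambda>y. Q (NN y))"
  have Bapp: "blinfun_apply B y = Q (NN y)" for y
    unfolding B_def by (subst bounded_linear_Blinfun_apply) (auto intro: bounded_linear_compose[OF Qbl NN(1)])
  have right: "blinfun_apply B y \<in> gen_dom T \<and> A (blinfun_apply B y) = y" for y
    unfolding Bapp using Qdom AQ NN(2) by simp
  have left: "blinfun_apply B (A x) = x" if x: "x \<in> gen_dom T" for x
  proof -
    define z where "z = blinfun_apply B (A x) - x"
    have bd: "blinfun_apply B (A x) \<in> gen_dom T" and ab: "A (blinfun_apply B (A x)) = A x"
      using right by auto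
    have zd: "z \<in> gen_dom T" unfolding z_def by (rule gen_diff(1)[OF bd x])
    have "generator T z = generator T (blinfun_apply B (A x)) - generator T x"
      unfolding z_def by (rule gen_diff(2)[OF bd x])
    also have "\<dots> = 0" using ab by (simp add: A_def)
    finally have gz: "generator T z = 0" .
    have fx: "\<And>s. s \<ge> 0 \<Longrightarrow> TT s z = z" by (rule gen_zero_fix[OF zd gz])
    have "J z = z" unfolding J_def using fix_J[OF fx c\<rho>] int\<rho> by simp
    then have "E z = z" unfolding E_def using fix_C[OF fx t0pos] by simp
    then have "norm z \<le> (1/2) * norm z" using Eq[of z] by simp
    then have "z = 0" by simp
    then show ?thesis unfolding z_def by simp
  qed
  show ?thesis using right left by blast
qed

end
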